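(* Let $X$ be a space with $\chi(X)\le\aleph_0$. There is no continuous, effective and transitive action on $X$ of an $\omega$-balanced group $G$ with $\psi(G)>\aleph_0$.
   Context: All spaces are Tychonoff. An action is effective if only the unit fixes every point, transitive if $Gx=X$. $\psi(G)$ is the pseudocharacter. $G$ is $\omega$-balanced if for each neighborhood $U$ of the unit there is a countable family $\gamma$ of neighborhoods of the unit such that each $x\in G$ has some $V\in\gamma$ with $xVx^{-1}\subset U$. *)

theory Defs
  imports "HOL-Analysis.Analysis" "HOL-Algebra.Group_Action"
begin

definition tychonoff_space :: "'a topology \<Rightarrow> bool" where
  "tychonoff_space X \<equiv> completely_regular_space X \<and> t1_space X"

definition topological_group :: "('a, 'm) monoid_scheme \<Rightarrow> 'a topology \<Rightarrow> bool" where
  "topological_group G T \<equiv> group G \<and> topspace T = carrier G \<and>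
     continuous_map (prod_topology T T) T (\<lambda>(x, y). x \<otimes>\<^bsub>G\<^esub> y) \<and>
     continuous_map T T (\<lambda>x. inv\<^bsub>G\<^esub> x)"

definition countable_character :: "'a topology \<Rightarrow> bool" where
  "countable_character X \<equiv> first_countable X"

definition countable_pseudocharacter :: "'a topology \<Rightarrow> bool" where
  "countable_pseudocharacter X \<equiv>
     \<forall>x \<in> topspace X. \<exists>\<U>. countable \<U> \<and> (\<forall>U \<in> \<U>. openin X U \<and> x \<in> U) \<and>
        topspace X \<inter> \<Inter>\<U> = {x}"

definition omega_balanced :: "('a, 'm) monoid_scheme \<Rightarrow> 'a topology \<Rightarrow> bool" where
  "omega_balanced G T \<equiv>
     \<forall>U. openin T U \<and> \<one>\<^bsub>G\<^esub> \<in> U \<longrightarrow>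
       (\<exists>\<gamma>. countable \<gamma> \<and> (\<forall>V \<in> \<gamma>. openin T V \<and> \<one>\<^bsub>G\<^esub> \<in> V) \<and>
          (\<forall>x \<in> carrier G. \<exists>V \<in> \<gamma>.
             {x \<otimes>\<^bsub>G\<^esub> v \<otimes>\<^bsub>G\<^esub> inv\<^bsub>G\<^esub> x | v. v \<in> V} \<subseteq> U))"

definition continuous_action ::
  "('a, 'm) monoid_scheme \<Rightarrow> 'a topology \<Rightarrow> 'b topology \<Rightarrow> ('a \<Rightarrow> 'b \<Rightarrow> 'b) \<Rightarrow> bool" where
  "continuous_action G T X \<phi> \<equiv> group_action G (topspace X) \<phi> \<and>
     continuous_map (prod_topology T X) X (\<lambda>(g, y). \<phi> g y)"

definition effective_action :: "('a, 'm) monoid_scheme \<Rightarrow> 'b set \<Rightarrow> ('a \<Rightarrow> 'b \<Rightarrow> 'b) \<Rightarrow> bool" where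
  "effective_action G E \<phi> \<equiv>
     \<forall>g \<in> carrier G. (\<forall>y \<in> E. \<phi> g y = y) \<longrightarrow> g = \<one>\<^bsub>G\<^esub>"

definition is_transitive_action :: "('a, 'm) monoid_scheme \<Rightarrow> 'b set \<Rightarrow> ('a \<Rightarrow> 'b \<Rightarrow> 'b) \<Rightarrow> bool" where
  "is_transitive_action G E \<phi> \<equiv> \<forall>x \<in> E. orbit G \<phi> x = E"

end

theory Submission
  imports Defs
begin

theorem corollary4p11:
  fixes G :: "('a, 'm) monoid_scheme" and T :: "'a topology" and X :: "'b topology"
  assumes "tychonoff_space X"
    and "countable_character X"
    and "topological_group G T"
    and "tychonoff_space T"
    and "omega_balanced G T"
    and "\<not> countable_pseudocharacter T"
  shows "\<not> (\<exists>\<phi>. continuous_action G T X \<phi> \<and> effective_action G (topspace X) \<phi> \<and>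
                 is_transitive_action G (topspace X) \<phi>)"
proof
  assume "\<exists>\<phi>. continuous_action G T X \<phi> \<and> effective_action G (topspace X) \<phi> \<and>
                 is_transitive_action G (topspace X) \<phi>"
  then obtain \<phi> where ca: "continuous_action G T X \<phi>" and eff: "effective_action G (topspace X) \<phi>"
    and tr: "is_transitive_action G (topspace X) \<phi>" by blast
  have ga: "group_action G (topspace X) \<phi>" and cphi: "continuous_map (prod_topology T X) X (\<lambda>(g, y). \<phi> g y)"
    using ca unfolding continuous_action_def by auto
  have grp: "group G" and tsT: "topspace T = carrier G"
    and cmul: "continuous_map (prod_topology T T) T (\<lambda>(x, y). x \<otimes>\<^bsub>G\<^esub> y)"
    using assms(3) unfolding topological_group_def by auto
  interpret group G by (rule grp)
  interpret A: group_action G "topspace X" \<phi> by (rule ga)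
  have t1: "t1_space X" using assms(1) unfolding tychonoff_space_def by auto
  have fc: "first_countable X" using assms(2) unfolding countable_character_def by auto
  have one_act: "\<And>y. y \<in> topspace X \<Longrightarrow> \<phi> \<one>\<^bsub>G\<^esub> y = y"
    by (metis A.id_eq_one restrict_apply')
  have "\<exists>F. countable F \<and> (\<forall>V\<in>F. openin T V \<and> \<one>\<^bsub>G\<^esub> \<in> V) \<and>
           (\<forall>g\<in>carrier G. (\<forall>V\<in>F. g \<in> V) \<longrightarrow> g = \<one>\<^bsub>G\<^esub>)"
  proof (cases "topspace X = {}")
    case True
    have "\<forall>g\<in>carrier G. g = \<one>\<^bsub>G\<^esub>" using eff True unfolding effective_action_def by auto
    then show ?thesis by (intro exI[of _ "{}"]) auto
  next
    case False
    then obtain x0 where x0: "x0 \<in> topspace X" by blast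
    obtain B where Bc: "countable B" and Bo: "\<forall>V\<in>B. openin X V"
      and Bb: "\<forall>U. openin X U \<and> x0 \<in> U \<longrightarrow> (\<exists>V\<in>B. x0 \<in> V \<and> V \<subseteq> U)"
      using bspec[OF fc[unfolded first_countable_def] x0] by auto
    define B' where "B' = {W\<in>B. x0 \<in> W}"
    define Ob where "Ob = (\<lambda>W. {g \<in> topspace T. \<phi> g x0 \<in> W})"
    have contx: "continuous_map T X (\<lambda>g. \<phi> g x0)"
    proof -
      have "continuous_map T (prod_topology T X) (\<lambda>g. (g, x0))"
        using x0 by (simp add: continuous_map_pairwise o_def)
      from continuous_map_compose[OF this cphi] show ?thesis by (simp add: o_def)
    qed
    have Oopen: "\<And>W. W \<in> B' \<Longrightarrow> openin T (Ob W)"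
    proof -
      fix W assume "W \<in> B'"
      hence "openin X W" using Bo unfolding B'_def by auto
      thus "openin T (Ob W)" unfolding Ob_def by (rule openin_continuous_map_preimage[OF contx])
    qed
    have O1: "\<And>W. W \<in> B' \<Longrightarrow> \<one>\<^bsub>G\<^esub> \<in> Ob W"
      unfolding Ob_def B'_def using one_act x0 tsT by auto
    have ex: "\<forall>W\<in>B'. \<exists>\<gamma>. countable \<gamma> \<and> (\<forall>V \<in> \<gamma>. openin T V \<and> \<one>\<^bsub>G\<^esub> \<in> V) \<and>
          (\<forall>x \<in> carrier G. \<exists>V \<in> \<gamma>. {x \<otimes>\<^bsub>G\<^esub> v \<otimes>\<^bsub>G\<^esub> inv\<^bsub>G\<^esub> x | v. v \<in> V} \<subseteq> Ob W)"
    proof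
      fix W assume WB: "W \<in> B'"
      show "\<exists>\<gamma>. countable \<gamma> \<and> (\<forall>V \<in> \<gamma>. openin T V \<and> \<one>\<^bsub>G\<^esub> \<in> V) \<and>
          (\<forall>x \<in> carrier G. \<exists>V \<in> \<gamma>. {x \<otimes>\<^bsub>G\<^esub> v \<otimes>\<^bsub>G\<^esub> inv\<^bsub>G\<^esub> x | v. v \<in> V} \<subseteq> Ob W)"
        using assms(5)[unfolded omega_balanced_def, rule_format, OF conjI[OF Oopen[OF WB] O1[OF WB]]] .
    qed
    then obtain \<Gamma> where \<Gamma>: "\<forall>W\<in>B'. countable (\<Gamma> W) \<and> (\<forall>V \<in> \<Gamma> W. openin T V \<and> \<one>\<^bsub>G\<^esub> \<in> V) \<and>
          (\<forall>x \<in> carrier G. \<exists>V \<in> \<Gamma> W. {x \<otimes>\<^bsub>G\<^esub> v \<otimes>\<^bsub>G\<^esub> inv\<^bsub>G\<^esub> x | v. v \<in> V} \<subseteq> Ob W)"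
      using bchoice[OF ex] by (elim exE) blast
    define F where "F = \<Union>(\<Gamma> ` B')"
    have "countable F" unfolding F_def using \<Gamma> Bc B'_def by (intro countable_UN) auto
    moreover have "\<forall>V\<in>F. openin T V \<and> \<one>\<^bsub>G\<^esub> \<in> V" unfolding F_def using \<Gamma> by auto
    moreover have "\<forall>g\<in>carrier G. (\<forall>V\<in>F. g \<in> V) \<longrightarrow> g = \<one>\<^bsub>G\<^esub>"
    proof (intro ballI impI, rule ccontr)
      fix g assume g: "g \<in> carrier G" and gF: "\<forall>V\<in>F. g \<in> V" and ne: "g \<noteq> \<one>\<^bsub>G\<^esub>"
      obtain y where y: "y \<in> topspace X" and gy: "\<phi> g y \<noteq> y"
        using eff g ne unfolding effective_action_def by blast
      have "y \<in> orbit G \<phi> x0" using tr x0 y unfolding is_transitive_action_def by auto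
      then obtain h where h: "h \<in> carrier G" and yh: "y = \<phi> h x0" unfolding orbit_def by auto
      define k where "k = inv\<^bsub>G\<^esub> h \<otimes>\<^bsub>G\<^esub> g \<otimes>\<^bsub>G\<^esub> inv\<^bsub>G\<^esub> (inv\<^bsub>G\<^esub> h)"
      have kc: "k \<in> carrier G" unfolding k_def using g h by auto
      have kh: "k = inv\<^bsub>G\<^esub> h \<otimes>\<^bsub>G\<^esub> g \<otimes>\<^bsub>G\<^esub> h" unfolding k_def using h by simp
      have hx: "\<phi> h x0 \<in> topspace X" using A.element_image h x0 by blast
      have gyX: "\<phi> g y \<in> topspace X" using A.element_image g y by blast
      have kx: "\<phi> k x0 \<noteq> x0"
      proof
        assume a: "\<phi> k x0 = x0"
        have "\<phi> k x0 = \<phi> (inv\<^bsub>G\<^esub> h \<otimes>\<^bsub>G\<^esub> g) (\<phi> h x0)"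
          unfolding kh using A.composition_rule[OF x0 m_closed[OF inv_closed[OF h] g] h] .
        also have "\<dots> = \<phi> (inv\<^bsub>G\<^esub> h) (\<phi> g (\<phi> h x0))"
          using A.composition_rule[OF hx inv_closed[OF h] g] .
        finally have "\<phi> h (\<phi> (inv\<^bsub>G\<^esub> h) (\<phi> g y)) = \<phi> h x0" using a yh by simp
        moreover have "\<phi> h (\<phi> (inv\<^bsub>G\<^esub> h) (\<phi> g y)) = \<phi> (h \<otimes>\<^bsub>G\<^esub> inv\<^bsub>G\<^esub> h) (\<phi> g y)"
          using A.composition_rule[OF gyX h inv_closed[OF h]] by simp
        moreover have "\<phi> (h \<otimes>\<^bsub>G\<^esub> inv\<^bsub>G\<^esub> h) (\<phi> g y) = \<phi> g y"
          using one_act[OF gyX] h by simp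
        ultimately show False using gy yh by simp
      qed
      have "\<phi> k x0 \<in> topspace X" using kc x0 A.element_image by blast
      then obtain U where U: "openin X U" "x0 \<in> U" "\<phi> k x0 \<notin> U"
        using t1[unfolded t1_space_def, rule_format, OF x0 \<open>\<phi> k x0 \<in> topspace X\<close>] kx by auto
      then obtain W where W: "W \<in> B" "x0 \<in> W" "W \<subseteq> U" using Bb by blast
      hence WB: "W \<in> B'" unfolding B'_def by auto
      then obtain V where V: "V \<in> \<Gamma> W" "{inv\<^bsub>G\<^esub> h \<otimes>\<^bsub>G\<^esub> v \<otimes>\<^bsub>G\<^esub> inv\<^bsub>G\<^esub> (inv\<^bsub>G\<^esub> h) | v. v \<in> V} \<subseteq> Ob W"
      proof -
        have "\<forall>x \<in> carrier G. \<exists>V \<in> \<Gamma> W. {x \<otimes>\<^bsub>G\<^esub> v \<otimes>\<^bsub>G\<^esub> inv\<^bsub>G\<^esub> x | v. v \<in> V} \<subseteq> Ob W"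
          using \<Gamma> WB by auto
        from bspec[OF this inv_closed[OF h]] show ?thesis by (elim bexE) (rule that)
      qed
      have "g \<in> V" using gF V WB unfolding F_def by auto
      hence "k \<in> Ob W" using V unfolding k_def by blast
      thus False using W U unfolding Ob_def by auto
    qed
    ultimately show ?thesis by blast
  qed
  then obtain F where Fc: "countable F" and Fo: "\<forall>V\<in>F. openin T V \<and> \<one>\<^bsub>G\<^esub> \<in> V"
    and Ft: "\<forall>g\<in>carrier G. (\<forall>V\<in>F. g \<in> V) \<longrightarrow> g = \<one>\<^bsub>G\<^esub>" by blast
  have "countable_pseudocharacter T"
    unfolding countable_pseudocharacter_def
  proof
    fix x assume x: "x \<in> topspace T"
    hence xc: "x \<in> carrier G" using tsT by simp
    have cl: "continuous_map T T (\<lambda>y. inv\<^bsub>G\<^esub> x \<otimes>\<^bsub>G\<^esub> y)"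
    proof -
      have "continuous_map T (prod_topology T T) (\<lambda>y. (inv\<^bsub>G\<^esub> x, y))"
        using xc tsT by (simp add: continuous_map_pairwise o_def)
      from continuous_map_compose[OF this cmul] show ?thesis by (simp add: o_def)
    qed
    define U where "U = (\<lambda>V. {y \<in> topspace T. inv\<^bsub>G\<^esub> x \<otimes>\<^bsub>G\<^esub> y \<in> V}) ` F"
    have "countable U" unfolding U_def using Fc by simp
    moreover have "\<forall>W\<in>U. openin T W \<and> x \<in> W"
      unfolding U_def using Fo x xc openin_continuous_map_preimage[OF cl] by auto
    moreover have "topspace T \<inter> \<Inter>U = {x}"
    proof
      show "topspace T \<inter> \<Inter>U \<subseteq> {x}"
      proof
        fix y assume y: "y \<in> topspace T \<inter> \<Inter>U"
        hence yc: "y \<in> carrier G" using tsT by auto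
        have "\<forall>V\<in>F. inv\<^bsub>G\<^esub> x \<otimes>\<^bsub>G\<^esub> y \<in> V" using y unfolding U_def by auto
        hence "inv\<^bsub>G\<^esub> x \<otimes>\<^bsub>G\<^esub> y = \<one>\<^bsub>G\<^esub>" using Ft xc yc by auto
        hence "inv\<^bsub>G\<^esub> y = inv\<^bsub>G\<^esub> x" using xc yc by (intro inv_equality) auto
        hence "y = x" using xc yc by (metis inv_inv)
        thus "y \<in> {x}" by simp
      qed
      show "{x} \<subseteq> topspace T \<inter> \<Inter>U"
        using x Fo xc unfolding U_def by auto
    qed
    ultimately show "\<exists>\<U>. countable \<U> \<and> (\<forall>U \<in> \<U>. openin T U \<and> x \<in> U) \<and> topspace T \<inter> \<Inter>\<U> = {x}"
      by blast
  qed
  thus False using assms(6) by simp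
qed

end
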